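(* Let $S_1,S_2,\ldots,S_k$ be numerical semigroups and let $S = \bigcap_{i=1}^k S_i$. Suppose that $d_i \in S_i \setminus \{0\}$ for $i=1,2,\ldots,k$. Then there exists an $A\in \mathsf{M}_{d_1+d_2+\cdots + d_k}(\mathbb{Q})$ such that $\mathcal{S}(A) = S$. In particular, $\dim_{\mathrm{mat}} S \leq d_1 + d_2 + \cdots + d_k$.
   Context: $\mathbb{N} = \{0,1,2,\ldots\}$. A semigroup means an additive subsemigroup of $\mathbb{N}$ containing $0$; a numerical semigroup is a semigroup with finite complement in $\mathbb{N}$. $\mathsf{M}_d(X)$ denotes the $d\times d$ matrices with entries in $X$. For $A \in \mathsf{M}_d(\mathbb{Q})$, $\mathcal{S}(A) = \{ n \in \mathbb{N} : A^n \in \mathsf{M}_d(\mathbb{Z})\}$. The matricial dimension $\dim_{\mathrm{mat}} S$ of a semigroup $S$ is the smallest $d$ such that $S = \mathcal{S}(A)$ for some $A \in \mathsf{M}_d(\mathbb{Q})$. *)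

theory Defs
  imports "Jordan_Normal_Form.Matrix"
begin

definition numerical_semigroup :: "nat set \<Rightarrow> bool" where
  "numerical_semigroup S \<longleftrightarrow>
     0 \<in> S \<and> (\<forall>a\<in>S. \<forall>b\<in>S. a + b \<in> S) \<and> finite (UNIV - S)"

definition int_entries :: "rat mat \<Rightarrow> bool" where
  "int_entries A \<longleftrightarrow> (\<forall>i<dim_row A. \<forall>j<dim_col A. A $$ (i, j) \<in> \<int>)"

definition power_semigroup :: "rat mat \<Rightarrow> nat set" where
  "power_semigroup A = {n. int_entries (A ^\<^sub>m n)}"

definition dim_mat :: "nat set \<Rightarrow> nat" where
  "dim_mat S = (LEAST d. \<exists>A \<in> carrier_mat d d. power_semigroup A = S)"

end

theory Submission
  imports Defs
begin

lemma funpow_lt: "\<forall>i<D. \<sigma> i < D \<Longrightarrow> i < D \<Longrightarrow> (\<sigma> ^^ n) i < (D::nat)"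
  by (induction n) auto

lemma two_powi_Ints: "((2::rat) powi m \<in> \<int>) \<longleftrightarrow> m \<ge> 0"
proof
  assume h: "(2::rat) powi m \<in> \<int>"
  show "m \<ge> 0"
  proof (rule ccontr)
    assume "\<not> m \<ge> 0"
    then have m: "m = - int (nat (-m))" "nat (-m) > 0" by auto
    have eq: "(2::rat) powi m = inverse (2 ^ nat (-m))"
    proof -
      have "(2::rat) powi m = 2 powi (- int (nat (-m)))" using m(1) by simp
      also have "\<dots> = inverse (2 powi int (nat (-m)))" by (rule power_int_minus)
      also have "(2::rat) powi int (nat (-m)) = 2 ^ nat (-m)" by (rule power_int_of_nat)
      finally show ?thesis .
    qed
    have p: "(2::rat) ^ nat (-m) > 1" using m(2) by (simp add: one_less_power)
    have a: "0 < (2::rat) powi m" "(2::rat) powi m < 1"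
      using p unfolding eq by (auto simp: inverse_less_1_iff)
    from h obtain z where z: "(2::rat) powi m = of_int z" by (auto elim: Ints_cases)
    with a have "0 < z" "z < 1" by simp_all
    then show False by simp
  qed
next
  assume "m \<ge> 0"
  then have "(2::rat) powi m = 2 ^ nat m"
    by (metis nat_0_le power_int_of_nat)
  then show "(2::rat) powi m \<in> \<int>" by simp
qed

definition wmat :: "nat \<Rightarrow> (nat \<Rightarrow> nat) \<Rightarrow> (nat \<Rightarrow> int) \<Rightarrow> rat mat" where
  "wmat D \<sigma> e = mat D D (\<lambda>(i,j). if j = \<sigma> i then (2::rat) powi e i else 0)"

lemma pow_entry:
  fixes \<sigma> :: "nat \<Rightarrow> nat" and e :: "nat \<Rightarrow> int"
  assumes sig: "\<forall>i<D. \<sigma> i < D"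
  shows "wmat D \<sigma> e ^\<^sub>m n \<in> carrier_mat D D \<and> (\<forall>i<D. \<forall>j<D. (wmat D \<sigma> e ^\<^sub>m n) $$ (i,j) =
     (if j = (\<sigma>^^n) i then 2 powi (\<Sum>t<n. e ((\<sigma>^^t) i)) else 0))"
proof -
  define A where "A = wmat D \<sigma> e"
  have A_def': "A = mat D D (\<lambda>(i,j). if j = \<sigma> i then (2::rat) powi e i else 0)"
    unfolding A_def wmat_def ..
  have "A ^\<^sub>m n \<in> carrier_mat D D \<and> (\<forall>i<D. \<forall>j<D. (A ^\<^sub>m n) $$ (i,j) =
     (if j = (\<sigma>^^n) i then 2 powi (\<Sum>t<n. e ((\<sigma>^^t) i)) else 0))"
proof (induction n)
  case 0
  have "A ^\<^sub>m 0 = 1\<^sub>m D" by (simp add: A_def')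
  then show ?case by auto
next
  case (Suc n)
  have Ac: "A \<in> carrier_mat D D" by (simp add: A_def')
  have car: "A ^\<^sub>m Suc n \<in> carrier_mat D D"
    unfolding pow_mat.simps using Suc.IH Ac by (intro mult_carrier_mat) auto
  have "(A ^\<^sub>m Suc n) $$ (i,j) =
     (if j = (\<sigma>^^Suc n) i then 2 powi (\<Sum>t<Suc n. e ((\<sigma>^^t) i)) else 0)"
    if i: "i < D" and j: "j < D" for i j
  proof -
    define s where "s = (\<sigma>^^n) i"
    have s: "s < D" using funpow_lt[OF sig i] s_def by simp
    have "(A ^\<^sub>m Suc n) $$ (i,j) = (\<Sum>k\<in>{0..<D}. (A ^\<^sub>m n) $$ (i,k) * A $$ (k,j))"
      using Suc i j by (auto simp: A_def' scalar_prod_def)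
    also have "\<dots> = (\<Sum>k\<in>{0..<D}. if k = s then 2 powi (\<Sum>t<n. e ((\<sigma>^^t) i)) * A $$ (k,j) else 0)"
      using Suc i by (intro sum.cong) (auto simp: s_def)
    also have "\<dots> = 2 powi (\<Sum>t<n. e ((\<sigma>^^t) i)) * A $$ (s,j)"
      using s by simp
    also have "\<dots> = (if j = (\<sigma>^^Suc n) i then 2 powi (\<Sum>t<Suc n. e ((\<sigma>^^t) i)) else 0)"
      using s j by (simp add: A_def' s_def power_int_add)
    finally show ?thesis .
  qed
  with car show ?case by blast
qed
  then show ?thesis unfolding A_def .
qed

lemma power_semigroup_char:
  fixes \<sigma> :: "nat \<Rightarrow> nat" and e :: "nat \<Rightarrow> int"
  assumes sig: "\<forall>i<D. \<sigma> i < D"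
  shows "power_semigroup (wmat D \<sigma> e) = {n. \<forall>i<D. 0 \<le> (\<Sum>t<n. e ((\<sigma>^^t) i))}"
proof -
  define A where "A = wmat D \<sigma> e"
  have "int_entries (A ^\<^sub>m n) \<longleftrightarrow> (\<forall>i<D. 0 \<le> (\<Sum>t<n. e ((\<sigma>^^t) i)))" for n
  proof -
    note pe = pow_entry[OF sig, where n=n and e=e, folded A_def]
    have d: "dim_row (A ^\<^sub>m n) = D" "dim_col (A ^\<^sub>m n) = D" using pe by auto
    show ?thesis
    proof
      assume h: "int_entries (A ^\<^sub>m n)"
      show "\<forall>i<D. 0 \<le> (\<Sum>t<n. e ((\<sigma>^^t) i))"
      proof (intro allI impI)
        fix i assume i: "i < D"
        have "(\<sigma>^^n) i < D" using funpow_lt[OF sig i] .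
        with h i pe d have "(2::rat) powi (\<Sum>t<n. e ((\<sigma>^^t) i)) \<in> \<int>"
          unfolding int_entries_def by force
        then show "0 \<le> (\<Sum>t<n. e ((\<sigma>^^t) i))" using two_powi_Ints by blast
      qed
    next
      assume h: "\<forall>i<D. 0 \<le> (\<Sum>t<n. e ((\<sigma>^^t) i))"
      show "int_entries (A ^\<^sub>m n)"
        unfolding int_entries_def d using pe h two_powi_Ints by auto
    qed
  qed
  then show ?thesis unfolding power_semigroup_def A_def by auto
qed

definition good :: "nat \<Rightarrow> nat set \<Rightarrow> bool" where
  "good D T \<longleftrightarrow> (\<exists>(\<sigma>::nat\<Rightarrow>nat) (e::nat\<Rightarrow>int). (\<forall>i<D. \<sigma> i < D) \<and>
      (\<forall>n. (\<forall>i<D. 0 \<le> (\<Sum>t<n. e ((\<sigma>^^t) i))) \<longleftrightarrow> n \<in> T))"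

lemma good_UNIV: "good 0 UNIV"
  unfolding good_def by auto

lemma good_combine:
  assumes "good D1 T1" "good D2 T2"
  shows "good (D1 + D2) (T1 \<inter> T2)"
proof -
  obtain \<sigma>1 and e1 :: "nat \<Rightarrow> int" where g1: "(\<forall>i<D1. \<sigma>1 i < D1) \<and>
      (\<forall>n. (\<forall>i<D1. 0 \<le> (\<Sum>t<n. e1 ((\<sigma>1^^t) i))) \<longleftrightarrow> n \<in> T1)"
    using assms(1) unfolding good_def by (elim exE) (erule that)
  obtain \<sigma>2 and e2 :: "nat \<Rightarrow> int" where g2: "(\<forall>i<D2. \<sigma>2 i < D2) \<and>
      (\<forall>n. (\<forall>i<D2. 0 \<le> (\<Sum>t<n. e2 ((\<sigma>2^^t) i))) \<longleftrightarrow> n \<in> T2)"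
    using assms(2) unfolding good_def by (elim exE) (erule that)
  have s1: "\<forall>i<D1. \<sigma>1 i < D1" and s2: "\<forall>i<D2. \<sigma>2 i < D2" using g1 g2 by simp_all
  have c1: "(\<forall>i<D1. 0 \<le> (\<Sum>t<n. e1 ((\<sigma>1^^t) i))) \<longleftrightarrow> n \<in> T1" for n
    using g1 by (elim conjE allE)
  have c2: "(\<forall>i<D2. 0 \<le> (\<Sum>t<n. e2 ((\<sigma>2^^t) i))) \<longleftrightarrow> n \<in> T2" for n
    using g2 by (elim conjE allE)
  define \<sigma> where "\<sigma> i = (if i < D1 then \<sigma>1 i else D1 + \<sigma>2 (i - D1))" for i
  define e where "e i = (if i < D1 then e1 i else e2 (i - D1))" for i
  have p1: "(\<sigma>^^t) i = (\<sigma>1^^t) i" if "i < D1" for i t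
    using that by (induction t) (auto simp: \<sigma>_def funpow_lt[OF s1])
  have p2: "(\<sigma>^^t) (D1 + i) = D1 + (\<sigma>2^^t) i" for i t
    by (induction t) (auto simp: \<sigma>_def)
  have sig: "\<forall>i<D1+D2. \<sigma> i < D1 + D2"
    using s1 s2 by (auto simp: \<sigma>_def)
  have "(\<forall>i<D1+D2. 0 \<le> (\<Sum>t<n. e ((\<sigma>^^t) i))) \<longleftrightarrow> n \<in> T1 \<inter> T2" for n
  proof -
    have a: "(\<Sum>t<n. e ((\<sigma>^^t) i)) = (\<Sum>t<n. e1 ((\<sigma>1^^t) i))" if "i < D1" for i
      using that by (intro sum.cong) (auto simp: p1 e_def funpow_lt[OF s1])
    have b: "(\<Sum>t<n. e ((\<sigma>^^t) (D1 + i))) = (\<Sum>t<n. e2 ((\<sigma>2^^t) i))" for i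
      by (intro sum.cong) (auto simp: p2 e_def)
    have L: "(\<forall>i<D1+D2. 0 \<le> (\<Sum>t<n. e ((\<sigma>^^t) i))) \<longleftrightarrow>
       (\<forall>i<D1. 0 \<le> (\<Sum>t<n. e1 ((\<sigma>1^^t) i))) \<and> (\<forall>i<D2. 0 \<le> (\<Sum>t<n. e2 ((\<sigma>2^^t) i)))"
    proof
      assume h: "\<forall>i<D1+D2. 0 \<le> (\<Sum>t<n. e ((\<sigma>^^t) i))"
      have h1: "\<forall>i<D1. 0 \<le> (\<Sum>t<n. e1 ((\<sigma>1^^t) i))"
      proof (intro allI impI)
        fix i assume i: "i < D1"
        then have "i < D1 + D2" by simp
        with h have "0 \<le> (\<Sum>t<n. e ((\<sigma>^^t) i))" by blast
        with a[OF i] show "0 \<le> (\<Sum>t<n. e1 ((\<sigma>1^^t) i))" by simp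
      qed
      have h2: "\<forall>i<D2. 0 \<le> (\<Sum>t<n. e2 ((\<sigma>2^^t) i))"
      proof (intro allI impI)
        fix i assume i: "i < D2"
        then have "D1 + i < D1 + D2" by simp
        with h have "0 \<le> (\<Sum>t<n. e ((\<sigma>^^t) (D1 + i)))" by blast
        with b[of i] show "0 \<le> (\<Sum>t<n. e2 ((\<sigma>2^^t) i))" by simp
      qed
      from h1 h2 show "(\<forall>i<D1. 0 \<le> (\<Sum>t<n. e1 ((\<sigma>1^^t) i))) \<and> (\<forall>i<D2. 0 \<le> (\<Sum>t<n. e2 ((\<sigma>2^^t) i)))" ..
    next
      assume h: "(\<forall>i<D1. 0 \<le> (\<Sum>t<n. e1 ((\<sigma>1^^t) i))) \<and> (\<forall>i<D2. 0 \<le> (\<Sum>t<n. e2 ((\<sigma>2^^t) i)))"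
      show "\<forall>i<D1+D2. 0 \<le> (\<Sum>t<n. e ((\<sigma>^^t) i))"
      proof (intro allI impI)
        fix i assume i: "i < D1 + D2"
        show "0 \<le> (\<Sum>t<n. e ((\<sigma>^^t) i))"
        proof (cases "i < D1")
          case True then show ?thesis using h a[OF True] by simp
        next
          case False
          then obtain j where j: "i = D1 + j" "j < D2" using i
            by (metis add_diff_inverse_nat add_less_cancel_left)
          then show ?thesis using h b[of j] by simp
        qed
      qed
    qed
    show ?thesis unfolding L c1 c2 by blast
  qed
  with sig show ?thesis unfolding good_def by blast
qed

lemma good_single:
  assumes ns: "numerical_semigroup S" and dS: "d \<in> S" and d0: "d > 0"
  shows "good d S"
proof -
  have S0: "0 \<in> S" and Sadd: "\<And>a b. a \<in> S \<Longrightarrow> b \<in> S \<Longrightarrow> a + b \<in> S"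
    and fin: "finite (UNIV - S)" using ns unfolding numerical_semigroup_def by auto
  obtain N where N: "\<And>m. m \<notin> S \<Longrightarrow> m < N"
    using fin by (metis Diff_iff UNIV_I finite_nat_set_iff_bounded)
  define w where "w r = (LEAST m. m \<in> S \<and> m mod d = r)" for r
  have ex: "\<exists>m. m \<in> S \<and> m mod d = r" if "r < d" for r
  proof -
    have "N \<le> N * d" using d0 by simp
    then have "r + N * d \<ge> N" by linarith
    then have "r + N * d \<in> S" using N by force
    moreover have "(r + N * d) mod d = r" using that by simp
    ultimately show ?thesis by blast
  qed
  have wS: "w r \<in> S" and wmod: "w r mod d = r" if "r < d" for r
    using LeastI_ex[OF ex[OF that]] unfolding w_def by auto
  have wle: "w (m mod d) \<le> m" if "m \<in> S" for m
    unfolding w_def using that by (intro Least_le) auto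
  have w0: "w 0 = 0" using wle[OF S0] by simp
  have mulS: "q * d \<in> S" for q by (induction q) (auto simp: S0 intro: Sadd dS)
  define \<sigma> where "\<sigma> j = Suc j mod d" for j
  define e where "e j = 1 + int (w j) - int (w (Suc j mod d))" for j
  have sig: "\<forall>i<d. \<sigma> i < d" using d0 by (auto simp: \<sigma>_def)
  have pw: "(\<sigma>^^t) j = (j + t) mod d" if "j < d" for j t
    using that by (induction t) (auto simp: \<sigma>_def mod_Suc_eq)
  have sm: "(\<Sum>t<n. e ((\<sigma>^^t) j)) = int n + int (w j) - int (w ((j + n) mod d))"
    if j: "j < d" for j n
  proof (induction n)
    case 0 then show ?case using j by simp
  next
    case (Suc n)
    have "Suc ((j + n) mod d) mod d = (j + Suc n) mod d" by (simp add: mod_Suc_eq)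
    then show ?case using Suc j by (simp add: pw e_def)
  qed
  have "(\<forall>i<d. 0 \<le> (\<Sum>t<n. e ((\<sigma>^^t) i))) \<longleftrightarrow> n \<in> S" for n
  proof
    assume h: "\<forall>i<d. 0 \<le> (\<Sum>t<n. e ((\<sigma>^^t) i))"
    from h[rule_format, OF d0] have le: "w (n mod d) \<le> n" using sm[OF d0, of n] w0 by simp
    have md: "w (n mod d) mod d = n mod d" using wmod d0 by simp
    then have "(n - w (n mod d)) mod d = 0" using le
      by (metis mod_eq_dvd_iff_nat dvd_imp_mod_0)
    then obtain q where "n - w (n mod d) = q * d" by (metis mod_eq_0_iff_dvd dvd_def mult.commute)
    then have "n = w (n mod d) + q * d" using le by simp
    moreover have "n mod d < d" using d0 by simp
    ultimately show "n \<in> S" using Sadd[OF wS mulS] by metis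
  next
    assume nS: "n \<in> S"
    show "\<forall>i<d. 0 \<le> (\<Sum>t<n. e ((\<sigma>^^t) i))"
    proof (intro allI impI)
      fix i assume i: "i < d"
      have "n + w i \<in> S" using Sadd[OF nS wS[OF i]] .
      then have "w ((n + w i) mod d) \<le> n + w i" by (rule wle)
      moreover have "(n + w i) mod d = (i + n) mod d"
        using wmod[OF i] by (metis add.commute mod_add_right_eq)
      ultimately show "0 \<le> (\<Sum>t<n. e ((\<sigma>^^t) i))" using sm[OF i, of n] by simp
    qed
  qed
  with sig show ?thesis unfolding good_def by blast
qed

lemma good_all:
  fixes k :: nat and S :: "nat \<Rightarrow> nat set" and d :: "nat \<Rightarrow> nat"
  assumes "\<And>i. i \<in> {1..k} \<Longrightarrow> numerical_semigroup (S i)"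
    and "\<And>i. i \<in> {1..k} \<Longrightarrow> d i \<in> S i - {0}"
  shows "good (\<Sum>i=1..k. d i) (\<Inter>i\<in>{1..k}. S i)"
  using assms
proof (induction k)
  case 0 then show ?case using good_UNIV by simp
next
  case (Suc k)
  have g1: "good (\<Sum>i=1..k. d i) (\<Inter>i\<in>{1..k}. S i)" using Suc by auto
  have g2: "good (d (Suc k)) (S (Suc k))"
    using Suc.prems by (intro good_single) auto
  have "{1..Suc k} = insert (Suc k) {1..k}" by auto
  then have e: "(\<Inter>i\<in>{1..Suc k}. S i) = (\<Inter>i\<in>{1..k}. S i) \<inter> S (Suc k)" by auto
  have s: "(\<Sum>i=1..Suc k. d i) = (\<Sum>i=1..k. d i) + d (Suc k)" by simp
  show ?case unfolding s e by (rule good_combine[OF g1 g2])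
qed

theorem theorem2p5:
  fixes k :: nat and S :: "nat \<Rightarrow> nat set" and d :: "nat \<Rightarrow> nat"
  assumes "\<And>i. i \<in> {1..k} \<Longrightarrow> numerical_semigroup (S i)"
    and "\<And>i. i \<in> {1..k} \<Longrightarrow> d i \<in> S i - {0}"
  shows "(\<exists>A \<in> carrier_mat (\<Sum>i=1..k. d i) (\<Sum>i=1..k. d i).
           power_semigroup A = (\<Inter>i\<in>{1..k}. S i))
         \<and> dim_mat (\<Inter>i\<in>{1..k}. S i) \<le> (\<Sum>i=1..k. d i)"
proof -
  define D where "D = (\<Sum>i=1..k. d i)"
  define T where "T = (\<Inter>i\<in>{1..k}. S i)"
  have "good D T" using good_all[OF assms] unfolding D_def T_def .
  then obtain \<sigma> and e :: "nat \<Rightarrow> int" where g: "(\<forall>i<D. \<sigma> i < D) \<and>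
      (\<forall>n. (\<forall>i<D. 0 \<le> (\<Sum>t<n. e ((\<sigma>^^t) i))) \<longleftrightarrow> n \<in> T)"
    unfolding good_def by (elim exE) (erule that)
  have sig: "\<forall>i<D. \<sigma> i < D" using g by simp
  have c: "(\<forall>i<D. 0 \<le> (\<Sum>t<n. e ((\<sigma>^^t) i))) \<longleftrightarrow> n \<in> T" for n
    using g by (elim conjE allE)
  define A where "A = wmat D \<sigma> e"
  have "power_semigroup A = T"
    using power_semigroup_char[OF sig] c unfolding A_def by auto
  moreover have A: "A \<in> carrier_mat D D" by (simp add: A_def wmat_def)
  ultimately have ex: "\<exists>A \<in> carrier_mat D D. power_semigroup A = T" by blast
  then have "dim_mat T \<le> D" unfolding dim_mat_def by (rule Least_le)
  with ex show ?thesis unfolding D_def T_def by blast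
qed

end
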